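(* Let $K$ be a compact Hausdorff topological space and $\kappa$ an infinite cardinal. If $C(K)$ admits an equivalent norm $|||\cdot|||$ such that $(C(K),|||\cdot|||)$ is $\mathrm{ASQ}_{<\kappa}$, then $C(K)$ contains an isomorphic copy of $c_0(\kappa)$.
   Context: $C(K)$ is the space of real-valued continuous functions on $K$ with the supremum norm. A Banach space $Z$ is $\mathrm{ASQ}_{<\kappa}$ if for every set $A\subset S_Z$ with $|A|<\kappa$ and every $\varepsilon>0$ there exists $y\in S_Z$ with $\|x\pm y\|\le 1+\varepsilon$ for all $x\in A$. *)

theory Defs
  imports "HOL-Analysis.Analysis" "HOL-Library.Equipollence"
begin

definition c0 :: "('k \<Rightarrow> real) set" where
  "c0 = {x. \<forall>e>0. finite {i. \<bar>x i\<bar> \<ge> e}}"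

definition c0_norm :: "('k \<Rightarrow> real) \<Rightarrow> real" where
  "c0_norm x = (SUP i. \<bar>x i\<bar>)"

definition equiv_norm :: "('z::real_normed_vector \<Rightarrow> real) \<Rightarrow> bool" where
  "equiv_norm N \<longleftrightarrow>
     (\<forall>x. N x = 0 \<longleftrightarrow> x = 0) \<and>
     (\<forall>x y. N (x + y) \<le> N x + N y) \<and>
     (\<forall>c x. N (scaleR c x) = \<bar>c\<bar> * N x) \<and>
     (\<exists>a b. 0 < a \<and> 0 < b \<and> (\<forall>x. a * norm x \<le> N x \<and> N x \<le> b * norm x))"

text \<open>(Z, N) is ASQ_{<kappa}, where kappa is the cardinality of the index set I.\<close>
definition ASQ_lt :: "('z::real_vector \<Rightarrow> real) \<Rightarrow> 'k set \<Rightarrow> bool" where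
  "ASQ_lt N I \<longleftrightarrow>
     (\<forall>A. A \<subseteq> {x. N x = 1} \<longrightarrow> A \<prec> I \<longrightarrow>
        (\<forall>e>0. \<exists>y. N y = 1 \<and> (\<forall>x\<in>A. N (x + y) \<le> 1 + e \<and> N (x - y) \<le> 1 + e)))"

definition contains_c0 :: "'k itself \<Rightarrow> 'z::real_normed_vector itself \<Rightarrow> bool" where
  "contains_c0 _ _ \<longleftrightarrow>
     (\<exists>T :: ('k \<Rightarrow> real) \<Rightarrow> 'z.
        (\<forall>x\<in>c0. \<forall>y\<in>c0. T (\<lambda>i. x i + y i) = T x + T y) \<and>
        (\<forall>c. \<forall>x\<in>c0. T (\<lambda>i. c * x i) = scaleR c (T x)) \<and>
        (\<exists>m M. 0 < m \<and> 0 < M \<and>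
           (\<forall>x\<in>c0. m * c0_norm x \<le> norm (T x) \<and> norm (T x) \<le> M * c0_norm x)))"

end

theory Submission
  imports Defs
begin

lemma not_lesspoll_imp: "\<not> A \<prec> B \<Longrightarrow> B \<lesssim> A"
proof -
  assume h: "\<not> A \<prec> B"
  show "B \<lesssim> A"
  proof (cases "A \<lesssim> B")
    case True
    then have "A \<approx> B" using h by (simp add: lesspoll_def)
    then show ?thesis by (meson eqpoll_sym eqpoll_imp_lepoll)
  next
    case False
    then have "\<not> (\<exists>f. inj_on f A \<and> f ` A \<subseteq> B)" by (simp add: lepoll_def)
    then have "(\<exists>f. inj_on f B \<and> f ` B \<subseteq> A)"
      by (metis card_of_ordLess card_of_ordLeq ordLess_imp_ordLeq)
    then show ?thesis by (simp add: lepoll_def)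
  qed
qed


lemma key:
  fixes N :: "('a::topological_space \<Rightarrow>\<^sub>C real) \<Rightarrow> real"
    and g :: "'a \<Rightarrow>\<^sub>C real"
  assumes Nsc: "\<And>c x. N (scaleR c x) = \<bar>c\<bar> * N x"
    and Nz: "\<And>x. N x = 0 \<longleftrightarrow> x = 0"
    and a: "a > 0" and Nlow: "\<And>x. a * norm x \<le> N x"
    and g0: "\<And>t. apply_bcontfun g t \<ge> 0" and gt0: "apply_bcontfun g tz > 0"
    and ep: "\<epsilon> > 0" and et: "\<eta> > 0"
  shows "\<exists>(g' :: 'a \<Rightarrow>\<^sub>C real) e. (\<forall>t. apply_bcontfun g' t \<ge> 0) \<and> (\<exists>t. apply_bcontfun g' t > 0)
     \<and> (\<forall>t. apply_bcontfun g' t > 0 \<longrightarrow> apply_bcontfun g t > 0) \<and> N e = 1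
     \<and> (\<forall>y. N (e + y) \<le> 1 + \<epsilon> \<and> N (e - y) \<le> 1 + \<epsilon> \<longrightarrow>
           (\<forall>t. apply_bcontfun g' t > 0 \<longrightarrow> \<bar>apply_bcontfun y t\<bar> \<le> \<epsilon> / a + \<eta>))"
proof -
  define S where "S = {\<bar>apply_bcontfun f t\<bar> | f t. N f \<le> 1 \<and> apply_bcontfun g t > 0}"
  define M where "M = Sup S"
  have valbd: "\<bar>apply_bcontfun f t\<bar> \<le> N f / a" for f t
  proof -
    have "\<bar>apply_bcontfun f t\<bar> \<le> norm f" using norm_bounded[of f t] by simp
    also have "\<dots> \<le> N f / a" using Nlow[of f] a by (simp add: field_simps)
    finally show ?thesis .
  qed
  have Sbd: "s \<le> 1 / a" if "s \<in> S" for s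
  proof -
    from that obtain f t where "s = \<bar>apply_bcontfun f t\<bar>" "N f \<le> 1" unfolding S_def by auto
    moreover have "N f / a \<le> 1 / a" using \<open>N f \<le> 1\<close> a by (simp add: divide_right_mono)
    ultimately show ?thesis using valbd[of f t] by linarith
  qed
  have bdd: "bdd_above S" using Sbd by (auto simp: bdd_above_def)
  have Npos: "N x > 0" if "x \<noteq> 0" for x
  proof -
    have "0 \<le> a * norm x" using a by simp
    then have "0 \<le> N x" using Nlow[of x] by linarith
    moreover have "N x \<noteq> 0" using Nz[of x] that by simp
    ultimately show ?thesis by linarith
  qed
  define c1 where "c1 = (const_bcontfun 1 :: 'a \<Rightarrow>\<^sub>C real)"
  have c1nz: "c1 \<noteq> 0"
  proof
    assume "c1 = 0"
    then have "apply_bcontfun c1 tz = apply_bcontfun 0 tz" by simp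
    then show False by (simp add: c1_def)
  qed
  then have Nc1: "N c1 > 0" by (rule Npos)
  define f1 where "f1 = scaleR (1 / N c1) c1"
  have "N f1 = 1" using Nc1 by (simp add: f1_def Nsc)
  then have f1S: "1 / N c1 \<in> S" unfolding S_def using gt0 Nc1
    by (auto simp: f1_def c1_def intro!: exI[of _ f1] exI[of _ tz])
  then have Mpos: "M > 0" unfolding M_def using cSup_upper[OF f1S bdd] Nc1
    by (meson less_le_trans zero_less_divide_1_iff)
  have Mle: "M \<le> 1 / a" unfolding M_def using f1S Sbd by (auto intro!: cSup_least)
  define c where "c = M - min \<eta> (M / 2)"
  have "c < M" using Mpos et by (simp add: c_def)
  then obtain s where "s \<in> S" "c < s" unfolding M_def using f1S less_cSupE[of c S] by blast
  then obtain f t1 where f: "N f \<le> 1" "apply_bcontfun g t1 > 0" "\<bar>apply_bcontfun f t1\<bar> > c"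
    unfolding S_def by auto
  have "c \<ge> M / 2" by (simp add: c_def)
  then have "apply_bcontfun f t1 \<noteq> 0" using f(3) Mpos by auto
  then have "f \<noteq> 0" by auto
  then have Nf: "N f > 0" by (rule Npos)
  define e where "e = scaleR (1 / N f) f"
  have Ne: "N e = 1" using Nf by (simp add: e_def Nsc)
  have eval: "\<bar>apply_bcontfun e t\<bar> \<ge> \<bar>apply_bcontfun f t\<bar>" for t
  proof -
    have "\<bar>apply_bcontfun e t\<bar> = \<bar>apply_bcontfun f t\<bar> / N f" using Nf by (simp add: e_def abs_mult)
    moreover have "\<bar>apply_bcontfun f t\<bar> \<le> \<bar>apply_bcontfun f t\<bar> / N f"
      using Nf f(1) by (simp add: le_divide_eq mult_left_le)
    ultimately show ?thesis by simp
  qed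
  define h where "h = (\<lambda>t. max 0 (min (apply_bcontfun g t) (\<bar>apply_bcontfun f t\<bar> - c)))"
  have hb: "h \<in> bcontfun"
  proof (rule bcontfun_normI)
    show "continuous_on UNIV h" unfolding h_def by (intro continuous_intros) auto
    show "norm (h x) \<le> norm g" for x
      using norm_bounded[of g x] g0[of x] unfolding h_def by auto
  qed
  define g' where "g' = Bcontfun h"
  have g'h: "apply_bcontfun g' = h" using hb by (simp add: g'_def Bcontfun_inverse)
  have P1: "\<forall>t. apply_bcontfun g' t \<ge> 0" by (simp add: g'h h_def)
  have P2: "\<exists>t. apply_bcontfun g' t > 0" using f by (auto simp: g'h h_def intro!: exI[of _ t1])
  have P3: "\<forall>t. apply_bcontfun g' t > 0 \<longrightarrow> apply_bcontfun g t > 0"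
      by (auto simp: g'h h_def)
  have P4: "\<forall>y. N (e + y) \<le> 1 + \<epsilon> \<and> N (e - y) \<le> 1 + \<epsilon> \<longrightarrow>
           (\<forall>t. apply_bcontfun g' t > 0 \<longrightarrow> \<bar>apply_bcontfun y t\<bar> \<le> \<epsilon> / a + \<eta>)"
  proof (intro allI impI)
    fix y t
    assume y: "N (e + y) \<le> 1 + \<epsilon> \<and> N (e - y) \<le> 1 + \<epsilon>" and t: "apply_bcontfun g' t > 0"
    have gt: "apply_bcontfun g t > 0" and ft: "\<bar>apply_bcontfun f t\<bar> > c"
      using t by (auto simp: g'h h_def)
    have bnd: "\<bar>apply_bcontfun z t\<bar> \<le> (1 + \<epsilon>) * M" if "N z \<le> 1 + \<epsilon>" for z
    proof -
      define z' where "z' = scaleR (1 / (1 + \<epsilon>)) z"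
      have "N z' \<le> 1" using that ep by (simp add: z'_def Nsc)
      then have "\<bar>apply_bcontfun z' t\<bar> \<in> S" unfolding S_def using gt by blast
      then have "\<bar>apply_bcontfun z' t\<bar> \<le> M" unfolding M_def using bdd by (rule cSup_upper)
      then show ?thesis using ep by (simp add: z'_def abs_mult field_simps)
    qed
    have p: "\<bar>apply_bcontfun e t + apply_bcontfun y t\<bar> \<le> (1 + \<epsilon>) * M"
      using bnd[of "e + y"] y by simp
    have m: "\<bar>apply_bcontfun e t - apply_bcontfun y t\<bar> \<le> (1 + \<epsilon>) * M"
      using bnd[of "e - y"] y by simp
    have "\<bar>apply_bcontfun e t\<bar> + \<bar>apply_bcontfun y t\<bar> \<le> (1 + \<epsilon>) * M"
      using p m by linarith
    then have "\<bar>apply_bcontfun y t\<bar> \<le> (1 + \<epsilon>) * M - c" using eval[of t] ft by linarith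
    also have "\<dots> \<le> \<epsilon> * M + \<eta>" by (simp add: c_def algebra_simps)
    also have "\<dots> \<le> \<epsilon> / a + \<eta>" using Mle ep by (simp add: mult_left_mono divide_inverse)
    finally show "\<bar>apply_bcontfun y t\<bar> \<le> \<epsilon> / a + \<eta>" .
  qed
  show ?thesis using P1 P2 P3 P4 Ne by blast
qed


lemma c0_add: "x \<in> c0 \<Longrightarrow> y \<in> c0 \<Longrightarrow> (\<lambda>i. x i + y i) \<in> c0"
proof -
  assume x: "x \<in> c0" and y: "y \<in> c0"
  show ?thesis unfolding c0_def
  proof (intro CollectI allI impI)
    fix e :: real assume e: "e > 0"
    have "{i. \<bar>x i + y i\<bar> \<ge> e} \<subseteq> {i. \<bar>x i\<bar> \<ge> e/2} \<union> {i. \<bar>y i\<bar> \<ge> e/2}" by auto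
    moreover have "finite ({i. \<bar>x i\<bar> \<ge> e/2} \<union> {i. \<bar>y i\<bar> \<ge> e/2})"
    proof -
      have hx: "\<forall>e>0. finite {i. e \<le> \<bar>x i\<bar>}" using x by (simp add: c0_def)
      have hy: "\<forall>e>0. finite {i. e \<le> \<bar>y i\<bar>}" using y by (simp add: c0_def)
      have "finite {i. e/2 \<le> \<bar>x i\<bar>}" by (rule hx[rule_format]) (use e in simp)
      moreover have "finite {i. e/2 \<le> \<bar>y i\<bar>}" by (rule hy[rule_format]) (use e in simp)
      ultimately show ?thesis by simp
    qed
    ultimately show "finite {i. \<bar>x i + y i\<bar> \<ge> e}" by (rule finite_subset)
  qed
qed

lemma c0_scale: "x \<in> c0 \<Longrightarrow> (\<lambda>i. c * x i) \<in> c0"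
proof -
  assume x: "x \<in> c0"
  show ?thesis unfolding c0_def
  proof (intro CollectI allI impI)
    fix e :: real assume e: "e > 0"
    show "finite {i. \<bar>c * x i\<bar> \<ge> e}"
    proof (cases "c = 0")
      case True then show ?thesis using e by simp
    next
      case False
      have "{i. \<bar>c * x i\<bar> \<ge> e} \<subseteq> {i. \<bar>x i\<bar> \<ge> e / \<bar>c\<bar>}"
        using False by (auto simp: abs_mult field_simps mult.commute)
      moreover have "finite {i. \<bar>x i\<bar> \<ge> e / \<bar>c\<bar>}"
      proof -
        have hx: "\<forall>e>0. finite {i. e \<le> \<bar>x i\<bar>}" using x by (simp add: c0_def)
        show ?thesis by (rule hx[rule_format]) (use e False in simp)
      qed
      ultimately show ?thesis by (rule finite_subset)
    qed
  qed
qed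

lemma c0_bdd: "x \<in> c0 \<Longrightarrow> bdd_above (range (\<lambda>i. \<bar>x i\<bar>))"
proof -
  assume x: "x \<in> c0"
  define I where "I = {i. \<bar>x i\<bar> \<ge> 1}"
  have fI: "finite I" using x unfolding c0_def I_def by auto
  have "\<bar>x i\<bar> \<le> 1 + (\<Sum>k\<in>I. \<bar>x k\<bar>)" for i
  proof (cases "i \<in> I")
    case True
    then have "\<bar>x i\<bar> \<le> (\<Sum>k\<in>I. \<bar>x k\<bar>)" using fI by (intro member_le_sum) auto
    then show ?thesis by simp
  next
    case False
    then have "\<bar>x i\<bar> < 1" by (simp add: I_def)
    moreover have "0 \<le> (\<Sum>k\<in>I. \<bar>x k\<bar>)" by (simp add: sum_nonneg)
    ultimately show ?thesis by linarith
  qed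
  then show ?thesis by (auto simp: bdd_above_def)
qed

lemma embed:
  fixes u :: "'k \<Rightarrow> ('a::t2_space \<Rightarrow>\<^sub>C real)"
  assumes u0: "\<And>i t. apply_bcontfun (u i) t \<ge> 0"
    and u1: "\<And>i t. apply_bcontfun (u i) t \<le> 1"
    and ud: "\<And>i k t. i \<noteq> k \<Longrightarrow> apply_bcontfun (u i) t = 0 \<or> apply_bcontfun (u k) t = 0"
    and up: "\<And>i. \<exists>p. apply_bcontfun (u i) p \<ge> 1/2"
  shows "contains_c0 TYPE('k) TYPE('a \<Rightarrow>\<^sub>C real)"
proof -
  define F where "F = (\<lambda>(x::'k \<Rightarrow> real) t. \<Sum>i\<in>{i. apply_bcontfun (u i) t \<noteq> 0}. x i * apply_bcontfun (u i) t)"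
  have Fone: "F x t = x i * apply_bcontfun (u i) t" if "apply_bcontfun (u i) t \<noteq> 0" for x t i
  proof -
    have "{i. apply_bcontfun (u i) t \<noteq> 0} = {i}" using that ud by blast
    then show ?thesis by (simp add: F_def)
  qed
  have Fzero: "F x t = 0" if "\<forall>i. apply_bcontfun (u i) t = 0" for x t
    using that by (simp add: F_def)
  have Fcases: "(\<exists>i. apply_bcontfun (u i) t \<noteq> 0 \<and> F x t = x i * apply_bcontfun (u i) t) \<or> F x t = 0" for x t
    using Fone Fzero by blast
  have Fb: "\<bar>F x t\<bar> \<le> c0_norm x" if x: "x \<in> c0" for x t
  proof -
    have le: "\<bar>x i\<bar> \<le> c0_norm x" for i
      unfolding c0_norm_def using c0_bdd[OF x] by (rule cSUP_upper[OF UNIV_I])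
    show ?thesis
    proof (cases "\<exists>i. apply_bcontfun (u i) t \<noteq> 0")
      case True
      then obtain i where "apply_bcontfun (u i) t \<noteq> 0" by blast
      then have "F x t = x i * apply_bcontfun (u i) t" by (rule Fone)
      then have "\<bar>F x t\<bar> = \<bar>x i\<bar> * apply_bcontfun (u i) t" using u0[of i t] by (simp add: abs_mult)
      also have "\<dots> \<le> \<bar>x i\<bar>" using u1[of i t] by (simp add: mult_left_le)
      finally show ?thesis using le[of i] by linarith
    next
      case False
      then show ?thesis using Fzero[of t x] le[of undefined] by auto
    qed
  qed
  have Fcont: "continuous_on UNIV (F x)" if x: "x \<in> c0" for x
  proof -
    have "isCont (F x) t0" for t0
    proof -
      have "((F x) \<longlongrightarrow> F x t0) (at t0)"
      proof (rule tendstoI)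
        fix \<epsilon> :: real assume ep: "\<epsilon> > 0"
        define I where "I = {i. \<bar>x i\<bar> \<ge> \<epsilon> / 3}"
        have hx: "\<forall>e>0. finite {i. e \<le> \<bar>x i\<bar>}" using x by (simp add: c0_def)
        have fI: "finite I" unfolding I_def by (rule hx[rule_format]) (use ep in simp)
        define S where "S = (\<lambda>t. \<Sum>i\<in>I. x i * apply_bcontfun (u i) t)"
        have Sc: "continuous_on UNIV S" unfolding S_def by (intro continuous_intros) simp
        have FS: "\<bar>F x t - S t\<bar> \<le> \<epsilon> / 3" for t
        proof (cases "\<exists>i. apply_bcontfun (u i) t \<noteq> 0")
          case True
          then obtain i where ui: "apply_bcontfun (u i) t \<noteq> 0" by blast
          have Fi: "F x t = x i * apply_bcontfun (u i) t" using ui by (rule Fone)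
          have "S t = (\<Sum>k\<in>I. if k = i then x i * apply_bcontfun (u i) t else 0)"
            unfolding S_def using ud ui by (intro sum.cong) auto
          also have "\<dots> = (if i \<in> I then x i * apply_bcontfun (u i) t else 0)"
            using fI by (simp add: sum.delta)
          finally have St: "S t = (if i \<in> I then x i * apply_bcontfun (u i) t else 0)" .
          show ?thesis
          proof (cases "i \<in> I")
            case True then show ?thesis using Fi St ep by simp
          next
            case False
            then have "\<bar>x i\<bar> < \<epsilon> / 3" by (simp add: I_def)
            moreover have "\<bar>x i * apply_bcontfun (u i) t\<bar> \<le> \<bar>x i\<bar>"
              using u0[of i t] u1[of i t] by (simp add: abs_mult mult_left_le)
            ultimately show ?thesis using Fi St False by simp
          qed
        next
          case False
          then have "F x t = 0" using Fzero by blast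
          moreover have "S t = 0" using False by (simp add: S_def)
          ultimately show ?thesis using ep by simp
        qed
        have "isCont S t0" using Sc by (simp add: continuous_on_eq_continuous_at)
        then have "(S \<longlongrightarrow> S t0) (at t0)" by (simp add: isCont_def)
        then have ev: "eventually (\<lambda>t. dist (S t) (S t0) < \<epsilon> / 3) (at t0)"
          using ep by (intro tendstoD) auto
        show "eventually (\<lambda>t. dist (F x t) (F x t0) < \<epsilon>) (at t0)"
        proof (rule eventually_mono[OF ev])
          fix t assume "dist (S t) (S t0) < \<epsilon> / 3"
          then show "dist (F x t) (F x t0) < \<epsilon>"
            using FS[of t] FS[of t0] unfolding dist_real_def by linarith
        qed
      qed
      then show ?thesis by (simp add: isCont_def)
    qed
    then show ?thesis by (simp add: continuous_at_imp_continuous_on)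
  qed
  have Fmem: "F x \<in> bcontfun" if x: "x \<in> c0" for x
    using Fcont[OF x] Fb[OF x] by (intro bcontfun_normI) auto
  define T where "T = (\<lambda>x. Bcontfun (F x))"
  have Tapp: "apply_bcontfun (T x) = F x" if "x \<in> c0" for x
    using Fmem[OF that] by (simp add: T_def Bcontfun_inverse)
  have lin1: "T (\<lambda>i. x i + y i) = T x + T y" if "x \<in> c0" "y \<in> c0" for x y
  proof (rule bcontfun_eqI)
    fix t
    show "apply_bcontfun (T (\<lambda>i. x i + y i)) t = apply_bcontfun (T x + T y) t"
      using that c0_add[OF that]
      by (simp add: Tapp F_def distrib_right sum.distrib)
  qed
  have lin2: "T (\<lambda>i. c * x i) = scaleR c (T x)" if "x \<in> c0" for c x
  proof (rule bcontfun_eqI)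
    fix t
    show "apply_bcontfun (T (\<lambda>i. c * x i)) t = apply_bcontfun (scaleR c (T x)) t"
      using that c0_scale[OF that]
      by (simp add: Tapp F_def sum_distrib_left mult.assoc)
  qed
  have up_b: "norm (T x) \<le> 1 * c0_norm x" if x: "x \<in> c0" for x
    using Fb[OF x] by (simp add: Tapp[OF x] norm_bound)
  have low_b: "1/2 * c0_norm x \<le> norm (T x)" if x: "x \<in> c0" for x
  proof -
    have "\<bar>x i\<bar> \<le> 2 * norm (T x)" for i
    proof -
      obtain p where p: "apply_bcontfun (u i) p \<ge> 1/2" using up by blast
      then have "apply_bcontfun (u i) p \<noteq> 0" by auto
      then have "F x p = x i * apply_bcontfun (u i) p" by (rule Fone)
      moreover have "\<bar>x i\<bar> * (1/2) \<le> \<bar>x i\<bar> * apply_bcontfun (u i) p"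
        using p by (intro mult_left_mono) auto
      moreover have "\<bar>apply_bcontfun (u i) p\<bar> = apply_bcontfun (u i) p" using u0[of i p] by simp
      ultimately have "\<bar>F x p\<bar> \<ge> \<bar>x i\<bar> / 2" by (simp add: abs_mult)
      moreover have "\<bar>F x p\<bar> \<le> norm (T x)" using norm_bounded[of "T x" p] by (simp add: Tapp[OF x])
      ultimately show ?thesis by linarith
    qed
    then have "c0_norm x \<le> 2 * norm (T x)" unfolding c0_norm_def by (intro cSUP_least) auto
    then show ?thesis by simp
  qed
  have "(\<forall>x\<in>c0. \<forall>y\<in>c0. T (\<lambda>i. x i + y i) = T x + T y) \<and>
        (\<forall>c. \<forall>x\<in>c0. T (\<lambda>i. c * x i) = scaleR c (T x)) \<and>
        (0 < (1/2::real) \<and> 0 < (1::real) \<and>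
           (\<forall>x\<in>c0. 1/2 * c0_norm x \<le> norm (T x) \<and> norm (T x) \<le> 1 * c0_norm x))"
    using lin1 lin2 up_b low_b by auto
  then show ?thesis unfolding contains_c0_def by blast
qed


theorem theorem3p3:
  fixes N :: "('a::t2_space \<Rightarrow>\<^sub>C real) \<Rightarrow> real"
  assumes "compact (UNIV :: 'a set)"
    and "infinite (UNIV :: 'k set)"
    and "equiv_norm N"
    and "ASQ_lt N (UNIV :: 'k set)"
  shows "contains_c0 TYPE('k) TYPE('a \<Rightarrow>\<^sub>C real)"
proof -
  have Nz: "\<And>x. N x = 0 \<longleftrightarrow> x = 0" and Nsc: "\<And>c x. N (scaleR c x) = \<bar>c\<bar> * N x"
    using assms(3) unfolding equiv_norm_def by auto
  obtain a b where a: "a > 0" and b: "b > 0" and Nab: "\<And>x. a * norm x \<le> N x \<and> N x \<le> b * norm x"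
    using assms(3) unfolding equiv_norm_def by blast
  have Nlow: "\<And>x. a * norm x \<le> N x" and Nup: "\<And>x. N x \<le> b * norm x" using Nab by auto
  define \<epsilon> where "\<epsilon> = min a 1 / (4 * b)"
  define \<delta> where "\<delta> = 1 / (2 * b)"
  have ep: "\<epsilon> > 0" using a b by (simp add: \<epsilon>_def)
  have epd: "\<epsilon> / a + \<epsilon> \<le> \<delta>"
  proof -
    have "\<epsilon> / a \<le> 1 / (4 * b)" using a b by (simp add: \<epsilon>_def field_simps)
    moreover have "\<epsilon> \<le> 1 / (4 * b)" using a b by (simp add: \<epsilon>_def field_simps)
    ultimately show ?thesis by (simp add: \<delta>_def field_simps)
  qed
  define Wit where "Wit = (\<lambda>(g::'a \<Rightarrow>\<^sub>C real) e. N e = 1 \<and> (\<forall>y. N (e + y) \<le> 1 + \<epsilon> \<and> N (e - y) \<le> 1 + \<epsilon> \<longrightarrow>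
           (\<forall>t. apply_bcontfun g t > 0 \<longrightarrow> \<bar>apply_bcontfun y t\<bar> \<le> \<delta>)))"
  define Good where "Good = (\<lambda>g::'a \<Rightarrow>\<^sub>C real. (\<forall>t. apply_bcontfun g t \<ge> 0) \<and> (\<exists>t. apply_bcontfun g t > 0) \<and> (\<exists>e. Wit g e))"
  have keyG: "\<exists>g'. Good g' \<and> (\<forall>t. apply_bcontfun g' t > 0 \<longrightarrow> apply_bcontfun g t > 0)"
    if gg0: "\<And>t. apply_bcontfun g t \<ge> 0" and ggp: "apply_bcontfun g t0 > 0" for g :: "'a \<Rightarrow>\<^sub>C real" and t0
  proof -
    obtain g' :: "'a \<Rightarrow>\<^sub>C real" and e where g': "\<forall>t. apply_bcontfun g' t \<ge> 0" "\<exists>t. apply_bcontfun g' t > 0"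
      "\<forall>t. apply_bcontfun g' t > 0 \<longrightarrow> apply_bcontfun g t > 0" "N e = 1"
      "\<forall>y. N (e + y) \<le> 1 + \<epsilon> \<and> N (e - y) \<le> 1 + \<epsilon> \<longrightarrow>
           (\<forall>t. apply_bcontfun g' t > 0 \<longrightarrow> \<bar>apply_bcontfun y t\<bar> \<le> \<epsilon> / a + \<epsilon>)"
      using key[where N=N and g=g and a=a and tz=t0 and \<epsilon>=\<epsilon> and \<eta>=\<epsilon>, OF Nsc Nz a Nlow gg0 ggp ep ep] by blast
    have "Wit g' e" unfolding Wit_def using g'(4,5) epd by (meson order_trans)
    then show ?thesis using g' unfolding Good_def by blast
  qed
  define Dis where "Dis = (\<lambda>G::('a \<Rightarrow>\<^sub>C real) set. \<forall>g\<in>G. \<forall>g'\<in>G. g \<noteq> g' \<longrightarrow>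
      (\<forall>t. apply_bcontfun g t = 0 \<or> apply_bcontfun g' t = 0))"
  define Fam where "Fam = {G. G \<subseteq> Collect Good \<and> Dis G}"
  have "\<forall>C\<in>chains Fam. \<Union>C \<in> Fam"
  proof
    fix C assume C: "C \<in> chains Fam"
    then have CF: "C \<subseteq> Fam" and ch: "chain\<^sub>\<subseteq> C" by (auto simp: chains_def)
    have "\<Union>C \<subseteq> Collect Good" using CF by (auto simp: Fam_def)
    moreover have "Dis (\<Union>C)" unfolding Dis_def
    proof (intro ballI impI)
      fix g g' assume "g \<in> \<Union>C" "g' \<in> \<Union>C" "g \<noteq> g'"
      then obtain X Y where XY: "X \<in> C" "Y \<in> C" "g \<in> X" "g' \<in> Y" by blast
      then have "X \<subseteq> Y \<or> Y \<subseteq> X" using ch by (auto simp: chain_subset_def)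
      then obtain Z where Z: "Z \<in> C" "g \<in> Z" "g' \<in> Z" using XY by blast
      then have "Dis Z" using CF by (auto simp: Fam_def)
      then show "\<forall>t. apply_bcontfun g t = 0 \<or> apply_bcontfun g' t = 0"
        using Z \<open>g \<noteq> g'\<close> unfolding Dis_def by blast
    qed
    ultimately show "\<Union>C \<in> Fam" by (simp add: Fam_def)
  qed
  then obtain G where GF: "G \<in> Fam" and Gmax: "\<forall>X\<in>Fam. G \<subseteq> X \<longrightarrow> X = G"
    using Zorn_Lemma by blast
  have GG: "\<And>g. g \<in> G \<Longrightarrow> Good g" and GD: "Dis G" using GF by (auto simp: Fam_def)
  have notless: "\<not> G \<prec> (UNIV :: 'k set)"
  proof
    assume Gl: "G \<prec> (UNIV :: 'k set)"
    define E where "E = (\<lambda>g. SOME e. Wit g e)"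
    have EW: "Wit g (E g)" if "g \<in> G" for g
      using GG[OF that] unfolding Good_def E_def by (meson someI_ex)
    have A1: "E ` G \<subseteq> {x. N x = 1}" using EW by (auto simp: Wit_def)
    have A2: "E ` G \<prec> (UNIV :: 'k set)" using Gl image_lepoll lesspoll_trans1 by blast
    obtain y where y: "N y = 1" "\<forall>x\<in>E ` G. N (x + y) \<le> 1 + \<epsilon> \<and> N (x - y) \<le> 1 + \<epsilon>"
      using assms(4) A1 A2 ep unfolding ASQ_lt_def by blast
    have ysmall: "\<bar>apply_bcontfun y t\<bar> \<le> \<delta>" if "g \<in> G" "apply_bcontfun g t > 0" for g t
      using EW[OF that(1)] y(2) that unfolding Wit_def by blast
    have "\<exists>t1. \<bar>apply_bcontfun y t1\<bar> > \<delta>"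
    proof (rule ccontr)
      assume "\<nexists>t1. \<bar>apply_bcontfun y t1\<bar> > \<delta>"
      then have "norm y \<le> \<delta>" by (intro norm_bound) (auto simp: not_less)
      then have "N y \<le> b * \<delta>" using Nup[of y] b by (meson mult_left_mono less_imp_le order_trans)
      then show False using y(1) b by (simp add: \<delta>_def)
    qed
    then obtain t1 where t1: "\<bar>apply_bcontfun y t1\<bar> > \<delta>" by blast
    define h where "h = (\<lambda>t. max 0 (\<bar>apply_bcontfun y t\<bar> - \<delta>))"
    have hb: "h \<in> bcontfun"
    proof (rule bcontfun_normI)
      show "continuous_on UNIV h" unfolding h_def by (intro continuous_intros) auto
      show "norm (h x) \<le> norm y + \<bar>\<delta>\<bar>" for x
        using norm_bounded[of y x] unfolding h_def by auto
    qed
    define hh where "hh = Bcontfun h"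
    have hhh: "apply_bcontfun hh = h" using hb by (simp add: hh_def Bcontfun_inverse)
    obtain g' where g': "Good g'" "\<forall>t. apply_bcontfun g' t > 0 \<longrightarrow> apply_bcontfun hh t > 0"
      using keyG[of hh t1] t1 by (auto simp: hhh h_def)
    have big: "\<bar>apply_bcontfun y t\<bar> > \<delta>" if "apply_bcontfun g' t > 0" for t
      using g'(2) that by (auto simp: hhh h_def)
    have g'G: "g' \<notin> G"
    proof
      assume "g' \<in> G"
      obtain t where "apply_bcontfun g' t > 0" using g'(1) unfolding Good_def by blast
      then show False using ysmall[OF \<open>g' \<in> G\<close>] big by force
    qed
    have "insert g' G \<in> Fam"
    proof -
      have "Dis (insert g' G)" unfolding Dis_def
      proof (intro ballI impI allI)
        fix g1 g2 t assume g12: "g1 \<in> insert g' G" "g2 \<in> insert g' G" "g1 \<noteq> g2"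
        have nn: "apply_bcontfun g t \<ge> 0" if "g \<in> insert g' G" for g
          using that GG g'(1) unfolding Good_def by auto
        have cross: "apply_bcontfun g t = 0 \<or> apply_bcontfun g' t = 0" if "g \<in> G" for g
        proof (rule ccontr)
          assume "\<not> ?thesis"
          then have "apply_bcontfun g t > 0" "apply_bcontfun g' t > 0"
            using nn[of g] nn[of g'] that by auto
          then show False using ysmall[OF that] big by force
        qed
        show "apply_bcontfun g1 t = 0 \<or> apply_bcontfun g2 t = 0"
        proof (cases "g1 = g'")
          case True then show ?thesis using g12 cross by auto
        next
          case False
          show ?thesis
          proof (cases "g2 = g'")
            case True then show ?thesis using g12 cross False by auto
          next
            case False2: False
            then show ?thesis using g12 False GD unfolding Dis_def by auto
          qed
        qed
      qed
      then show ?thesis using GF g'(1) by (auto simp: Fam_def)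
    qed
    then have "insert g' G = G" using Gmax by blast
    then show False using g'G by blast
  qed
  then have "(UNIV :: 'k set) \<lesssim> G" by (rule not_lesspoll_imp)
  then obtain j :: "'k \<Rightarrow> ('a \<Rightarrow>\<^sub>C real)" where j: "inj j" "range j \<subseteq> G" unfolding lepoll_def by blast
  define u where "u = (\<lambda>i. scaleR (1 / norm (j i)) (j i))"
  have jG: "Good (j i)" for i using j GG by auto
  have jnz: "j i \<noteq> 0" for i
  proof
    assume "j i = 0"
    then show False using jG[of i] unfolding Good_def by auto
  qed
  have jn: "norm (j i) > 0" for i using jnz by simp
  have uapp: "apply_bcontfun (u i) t = apply_bcontfun (j i) t / norm (j i)" for i t
    by (simp add: u_def)
  have u0: "apply_bcontfun (u i) t \<ge> 0" for i t
    using jG[of i] jn[of i] unfolding uapp Good_def by auto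
  have u1: "apply_bcontfun (u i) t \<le> 1" for i t
    using norm_bounded[of "j i" t] jn[of i] unfolding uapp by (simp add: divide_le_eq_1)
  have ud: "apply_bcontfun (u i) t = 0 \<or> apply_bcontfun (u k) t = 0" if "i \<noteq> k" for i k t
  proof -
    have "j i \<noteq> j k" using j(1) that by (auto simp: inj_def)
    then have "apply_bcontfun (j i) t = 0 \<or> apply_bcontfun (j k) t = 0"
      using GD j(2) unfolding Dis_def by blast
    then show ?thesis unfolding uapp by auto
  qed
  have up: "\<exists>p. apply_bcontfun (u i) p \<ge> 1/2" for i
  proof (rule ccontr)
    assume "\<not> ?thesis"
    then have lt: "apply_bcontfun (u i) p < 1/2" for p by (simp add: not_le)
    have "norm (apply_bcontfun (u i) p) \<le> 1/2" for p using lt[of p] u0[of i p] by simp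
    then have "norm (u i) \<le> 1/2" by (rule norm_bound)
    moreover have "norm (u i) = 1" using jn[of i] by (simp add: u_def)
    ultimately show False by simp
  qed
  show ?thesis by (rule embed[OF u0 u1 ud up])
qed
end
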